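(* Let $(V,\|\cdot\|_V)$, $(\mathcal V,\|\cdot\|_{\mathcal V})$, $(W,\|\cdot\|_W)$, $(\mathcal W,\|\cdot\|_{\mathcal W})$ be normed real vector spaces with $V\subseteq\mathcal V$ continuously and $W\subseteq\mathcal W$ continuously, and let $\epsilon,\theta\in[0,\infty)$, $\varepsilon,\vartheta\in(0,\infty)$ and $F\colon V\to W$ satisfy for all $v,w\in V$ that $\|F(v)-F(w)\|_W\le\epsilon(1+\|v\|_{\mathcal V}^\varepsilon+\|w\|_{\mathcal V}^\varepsilon)\|v-w\|_{\mathcal V}$, $\vartheta=2\varepsilon$, and $$\theta=\max\Big\{3\epsilon^2\Big[\sup_{u\in W\setminus\{0\}}\tfrac{\|u\|_{\mathcal W}^2}{\|u\|_W^2}\Big]\Big[1+\sup_{u\in V\setminus\{0\}}\tfrac{\|u\|_{\mathcal V}^{2\varepsilon}}{\|u\|_V^{2\varepsilon}}\Big](1+2^{\max\{2\varepsilon-1,0\}}),\ (8\epsilon^2+2\|F(0)\|_W^2)\max\Big\{1,\sup_{u\in V\setminus\{0\}}\tfrac{\|u\|_{\mathcal V}^{2+2\varepsilon}}{\|u\|_V^{2+2\varepsilon}}\Big\}\Big\}.$$ Then for all $v,w\in V$ it holds that $\|F(v)\|_W^2\le\theta\max\{1,\|v\|_V^{2+\vartheta}\}$ and $$\|F(v)-F(w)\|_{\mathcal W}^2\le\theta\max\{1,\|v\|_V^\vartheta\}\|v-w\|_{\mathcal V}^2+\theta\|v-w\|_{\mathcal V}^{2+\vartheta}.$$ *)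

theory Defs
  imports "HOL-Analysis.Analysis"
begin

text \<open>For a continuous embedding i of a normed space V into another normed space,
  emb_sup i p = sup over u in V with u nonzero of (norm (i u)) powr p / (norm u) powr p.
  The value 0 is adjoined so that the supremum over an empty index set
  (trivial space V) is 0; all ratios are nonnegative, so otherwise this is
  the ordinary supremum.\<close>
definition emb_sup :: "('a::real_normed_vector \<Rightarrow> 'b::real_normed_vector) \<Rightarrow> real \<Rightarrow> real" where
  "emb_sup i p = Sup (insert 0 {norm (i u) powr p / norm u powr p | u. u \<noteq> 0})"

end

theory Submission imports Defs begin
lemma le_powr_small: fixes x p :: real assumes "0\<le>x" "x\<le>1" "0<p" "p\<le>1"
  shows "x \<le> x powr p"
proof (cases "x=0")
  case True then show ?thesis by simp
next
  case False
  then show ?thesis using powr_mono'[of p 1 x] assms by simp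
qed

lemma sub_le: fixes a d p :: real assumes "a\<ge>0" "d\<ge>0" "0<p" "p\<le>1"
  shows "(a+d) powr p \<le> a powr p + d powr p"
proof (cases "a+d = 0")
  case True then show ?thesis using assms by simp
next
  case False
  hence s: "a+d>0" using assms by simp
  have h1: "a/(a+d) \<le> (a/(a+d)) powr p"
    using assms s by (intro le_powr_small) auto
  have h2: "d/(a+d) \<le> (d/(a+d)) powr p"
    using assms s by (intro le_powr_small) auto
  have e: "a/(a+d)+d/(a+d)=1" using s by (simp add: add_divide_distrib[symmetric])
  have "1 \<le> (a/(a+d)) powr p + (d/(a+d)) powr p"
    using h1 h2 e by linarith
  also have "\<dots> = (a powr p + d powr p) / (a+d) powr p"
    using assms s by (simp add: powr_divide add_divide_distrib)
  finally show ?thesis using s by simp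
qed

lemma conv_le: fixes a d p :: real assumes "a\<ge>0" "d\<ge>0" "1\<le>p"
  shows "(a+d) powr p \<le> 2 powr (p-1) * (a powr p + d powr p)"
proof -
  have two: "1 \<le> 2 powr (p-1)" using assms by (intro ge_one_powr_ge_zero) auto
  consider "a=0" | "d=0" | "a>0 \<and> d>0" using assms by linarith
  then show ?thesis
  proof cases
    case 1 then show ?thesis using two assms
      using mult_right_mono[OF two, of "d powr p"] by simp
  next
    case 2 then show ?thesis using two assms
      using mult_right_mono[OF two, of "a powr p"] by simp
  next
    case 3
    have c: "convex_on {0<..} (\<lambda>x. x powr p)" using powr_convex assms by blast
    have "((1/2)*a + (1/2)*d) powr p \<le> (1/2) * a powr p + (1/2) * d powr p"
      using convex_onD[OF c, of "1/2" a d] 3 by simp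
    hence "((a+d)/2) powr p \<le> (a powr p + d powr p)/2" by (simp add: field_simps)
    moreover have "((a+d)/2) powr p = (a+d) powr p / 2 powr p" using 3 by (simp add: powr_divide)
    moreover have "2 powr p = 2 * 2 powr (p-1)" by (simp add: powr_diff)
    ultimately show ?thesis by (simp add: field_simps)
  qed
qed

lemma gen_le: fixes a d p :: real assumes "a\<ge>0" "d\<ge>0" "0<p"
  shows "(a+d) powr p \<le> 2 powr (max (p-1) 0) * (a powr p + d powr p)"
proof (cases "p \<le> 1")
  case True then show ?thesis using sub_le[OF assms] assms by simp
next
  case False then show ?thesis using conv_le[of a d p] assms by simp
qed
lemma emb_sup_bdd:
  assumes "bounded_linear i" "p > 0"
  shows "bdd_above (insert 0 {norm (i u) powr p / norm u powr p | u. u \<noteq> 0})"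
proof -
  obtain K where K: "K>0" "\<And>x. norm (i x) \<le> norm x * K"
    using bounded_linear.pos_bounded[OF assms(1)] by blast
  have "norm (i u) powr p / norm u powr p \<le> K powr p" if "u \<noteq> 0" for u
  proof -
    have "norm (i u) / norm u \<le> K" using K(2)[of u] that by (simp add: divide_le_eq mult.commute)
    hence "(norm (i u) / norm u) powr p \<le> K powr p" using assms by (intro powr_mono2) auto
    thus ?thesis by (simp add: powr_divide)
  qed
  then show ?thesis using K by (intro bdd_aboveI[where M="max 0 (K powr p)"]) fastforce
qed

lemma emb_sup_ge0:
  assumes "bounded_linear i" "p > 0"
  shows "emb_sup i p \<ge> 0"
  unfolding emb_sup_def using emb_sup_bdd[OF assms] by (intro cSup_upper) auto

lemma emb_sup_le:
  assumes "bounded_linear i" "p > 0"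
  shows "norm (i u) powr p \<le> emb_sup i p * norm u powr p"
proof (cases "u = 0")
  case True then show ?thesis using assms linear_simps(3)[OF assms(1)] by simp
next
  case False
  have "norm (i u) powr p / norm u powr p \<le> emb_sup i p"
    unfolding emb_sup_def using emb_sup_bdd[OF assms] False by (intro cSup_upper) auto
  then show ?thesis using False by (simp add: divide_le_eq)
qed
theorem lemma2p4:
  fixes iV :: "'v::real_normed_vector \<Rightarrow> 'vv::real_normed_vector"
    and iW :: "'w::real_normed_vector \<Rightarrow> 'ww::real_normed_vector"
    and F :: "'v \<Rightarrow> 'w"
    and eps theta epsl vtheta :: real
  assumes iV_lin: "bounded_linear iV" and iV_inj: "inj iV"
    and iW_lin: "bounded_linear iW" and iW_inj: "inj iW"
    and eps_nonneg: "eps \<ge> 0" and theta_nonneg: "theta \<ge> 0"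
    and epsl_pos: "epsl > 0" and vtheta_pos: "vtheta > 0"
    and F_lip: "\<And>v w. norm (F v - F w) \<le>
        eps * (1 + norm (iV v) powr epsl + norm (iV w) powr epsl) * norm (iV (v - w))"
    and vtheta_def: "vtheta = 2 * epsl"
    and theta_def: "theta = max
        (3 * eps\<^sup>2 * emb_sup iW 2 * (1 + emb_sup iV (2 * epsl)) * (1 + 2 powr (max (2 * epsl - 1) 0)))
        ((8 * eps\<^sup>2 + 2 * (norm (F 0))\<^sup>2) * max 1 (emb_sup iV (2 + 2 * epsl)))"
  shows "\<forall>v w. (norm (F v))\<^sup>2 \<le> theta * max 1 (norm v powr (2 + vtheta))
            \<and> (norm (iW (F v - F w)))\<^sup>2 \<le>
                theta * max 1 (norm v powr vtheta) * (norm (iV (v - w)))\<^sup>2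
                + theta * norm (iV (v - w)) powr (2 + vtheta)"
  proof (intro allI conjI)
  fix v w
  let ?cV = "emb_sup iV (2*epsl)" and ?cV2 = "emb_sup iV (2+2*epsl)" and ?Cw = "emb_sup iW 2"
  let ?c = "2 powr (max (2 * epsl - 1) 0)"
  define a where "a = norm (iV v)"
  define b where "b = norm (iV w)"
  define d where "d = norm (iV (v - w))"
  have a0: "a \<ge> 0" "b \<ge> 0" "d \<ge> 0" by (auto simp: a_def b_def d_def)
  have iV0: "iV 0 = 0" using linear_simps(3)[OF iV_lin] .
  have cV0: "?cV \<ge> 0" "?cV2 \<ge> 0" "?Cw \<ge> 0" using epsl_pos
    by (auto intro!: emb_sup_ge0 iV_lin iW_lin)
  have c0: "?c \<ge> 0" by simp
  define M where "M = max 1 ?cV2"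
  define X where "X = max 1 (norm v powr (2 + vtheta))"
  have M1: "M \<ge> 1" and X1: "X \<ge> 1" by (auto simp: M_def X_def)
  define y where "y = a powr (1+epsl)"
  have y0: "y \<ge> 0" by (simp add: y_def)
  have ya: "a * a powr epsl = y" unfolding y_def using a0 by (simp add: powr_add)
  have hF: "norm (F v - F 0) \<le> eps * (1 + a powr epsl) * a"
    using F_lip[of v 0] epsl_pos by (simp add: a_def iV0)
  have "norm (F v) \<le> norm (F 0) + eps * (a + y)"
  proof -
    have e: "a * (eps * a powr epsl) = eps * y" using ya by (simp add: algebra_simps)
    have "eps * (1 + a powr epsl) * a = eps*a + a * (eps * a powr epsl)" by (simp add: algebra_simps)
    thus ?thesis using hF norm_triangle_ineq2[of "F v" "F 0"] e by (simp add: algebra_simps)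
  qed
  hence "(norm (F v))\<^sup>2 \<le> (norm (F 0) + eps * (a + y))\<^sup>2"
    using \<open>norm (F v) \<le> _\<close> by (intro power_mono) auto
  also have "\<dots> \<le> 2 * (norm (F 0))\<^sup>2 + 2 * (eps * (a+y))\<^sup>2"
    by (smt (verit) sum_squares_bound power2_sum)
  also have "(eps*(a+y))\<^sup>2 \<le> eps\<^sup>2 * (2*a\<^sup>2 + 2*y\<^sup>2)"
    by (simp add: power_mult_distrib) (intro mult_left_mono, smt (verit) sum_squares_bound power2_sum, simp)
  finally have P1: "(norm (F v))\<^sup>2 \<le> 2 * (norm (F 0))\<^sup>2 + 4 * eps\<^sup>2 * (a\<^sup>2 + y\<^sup>2)"
    by (simp add: algebra_simps)
  have y2: "y\<^sup>2 = a powr (2 + 2*epsl)"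
    unfolding y_def power2_eq_square powr_add[symmetric] by (simp add: algebra_simps)
  have yM: "y\<^sup>2 \<le> M * X"
  proof -
    have "y\<^sup>2 \<le> ?cV2 * norm v powr (2+2*epsl)"
      unfolding y2 a_def using epsl_pos by (intro emb_sup_le iV_lin) auto
    also have "\<dots> \<le> M * X" unfolding M_def X_def vtheta_def
      by (intro mult_mono) auto
    finally show ?thesis .
  qed
  have MX1: "1 \<le> M * X" using M1 X1 by (metis mult_mono' mult_1 zero_le_one)
  have aM: "a\<^sup>2 \<le> M * X"
  proof (cases "a \<le> 1")
    case True
    hence "a\<^sup>2 \<le> 1" using a0 by (simp add: power_le_one)
    also have "1 \<le> M * X" using M1 X1 by (metis mult_mono' mult_1 zero_le_one)
    finally show ?thesis .
  next
    case False
    hence "a\<^sup>2 = a powr 2" by (simp add: powr_numeral)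
    also have "\<dots> \<le> a powr (2 + 2*epsl)" using False epsl_pos by (intro powr_mono) auto
    finally show ?thesis using yM y2 by simp
  qed
  have "2 * (norm (F 0))\<^sup>2 \<le> 2 * (norm (F 0))\<^sup>2 * (M * X)"
    using mult_left_mono[OF MX1, of "2 * (norm (F 0))\<^sup>2"] by simp
  hence "(norm (F v))\<^sup>2 \<le> (8 * eps\<^sup>2 + 2 * (norm (F 0))\<^sup>2) * M * X"
    using P1 aM yM mult_left_mono[OF add_mono[OF aM yM], of "4*eps\<^sup>2"]
    by (simp add: algebra_simps)
  also have "\<dots> \<le> theta * X"
    unfolding theta_def M_def using X1 by (intro mult_right_mono) auto
  finally show "(norm (F v))\<^sup>2 \<le> theta * max 1 (norm v powr (2 + vtheta))" by (simp add: X_def)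
next
  fix v w
  let ?cV = "emb_sup iV (2*epsl)" and ?Cw = "emb_sup iW 2"
  let ?c = "2 powr (max (2 * epsl - 1) 0)"
  define a where "a = norm (iV v)"
  define b where "b = norm (iV w)"
  define d where "d = norm (iV (v - w))"
  define A where "A = a powr epsl"
  define B where "B = b powr epsl"
  define N where "N = norm v powr vtheta"
  define D where "D = d powr vtheta"
  define Mx where "Mx = max 1 N"
  have a0: "a \<ge> 0" "b \<ge> 0" "d \<ge> 0" by (auto simp: a_def b_def d_def)
  have cV0: "?cV \<ge> 0" "?Cw \<ge> 0" using epsl_pos
    by (auto intro!: emb_sup_ge0 iV_lin iW_lin)
  have c0: "?c \<ge> 0" by simp
  have N0: "N \<ge> 0" "D \<ge> 0" by (auto simp: N_def D_def)
  have Mx: "1 \<le> Mx" "N \<le> Mx" by (auto simp: Mx_def)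
  have hW: "(norm (iW (F v - F w)))\<^sup>2 \<le> ?Cw * (norm (F v - F w))\<^sup>2"
    using emb_sup_le[OF iW_lin, of 2 "F v - F w"] by simp
  have hx: "norm (F v - F w) \<le> eps * (1 + A + B) * d"
    using F_lip[of v w] by (simp add: a_def b_def d_def A_def B_def)
  have AB0: "A \<ge> 0" "B \<ge> 0" by (auto simp: A_def B_def)
  have hx2: "(norm (F v - F w))\<^sup>2 \<le> eps\<^sup>2 * (1 + A + B)\<^sup>2 * d\<^sup>2"
    using power_mono[OF hx, of 2] by (simp add: power_mult_distrib)
  have sq0: "0 \<le> (1-A)\<^sup>2+(1-B)\<^sup>2+(A-B)\<^sup>2" by simp
  have sq: "(1 + A + B)\<^sup>2 \<le> 3 * (1 + A\<^sup>2 + B\<^sup>2)"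
    using sq0 by (simp add: power2_eq_square algebra_simps)
  have A2: "A\<^sup>2 = a powr vtheta" unfolding A_def power2_eq_square powr_add[symmetric] vtheta_def by simp
  have B2: "B\<^sup>2 = b powr vtheta" unfolding B_def power2_eq_square powr_add[symmetric] vtheta_def by simp
  have bad: "b \<le> a + d"
  proof -
    have "iV w = iV v - iV (v - w)" using linear_simps(2)[OF iV_lin, of v "v-w"] by simp
    thus ?thesis unfolding a_def b_def d_def by (metis norm_triangle_ineq4)
  qed
  have vt: "vtheta > 0" using vtheta_pos .
  have B2le: "B\<^sup>2 \<le> ?c * (a powr vtheta + D)"
  proof -
    have "B\<^sup>2 \<le> (a+d) powr vtheta" unfolding B2 using bad a0 vt by (intro powr_mono2) auto
    also have "\<dots> \<le> ?c * (a powr vtheta + D)" unfolding D_def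
      using gen_le[of a d vtheta] a0 vt by (simp add: vtheta_def)
    finally show ?thesis .
  qed
  have aN: "a powr vtheta \<le> ?cV * N"
    unfolding a_def N_def vtheta_def using epsl_pos by (intro emb_sup_le iV_lin) auto
  have Q: "1 + A\<^sup>2 + B\<^sup>2 \<le> (1 + ?cV) * (1 + ?c) * Mx + (1 + ?cV) * (1 + ?c) * D"
  proof -
    have "1 + A\<^sup>2 + B\<^sup>2 \<le> 1 + ?cV * N + ?c * (?cV * N + D)"
    proof -
      have h: "?c * a powr vtheta \<le> ?c * (?cV * N)" using mult_left_mono[OF aN c0] .
      have e1: "?c * (a powr vtheta + D) = ?c * a powr vtheta + ?c * D" by (simp add: algebra_simps)
      have e2: "?c * (?cV * N + D) = ?c * (?cV * N) + ?c * D" by (simp add: algebra_simps)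
      show ?thesis using A2 B2le aN h e1 e2 by linarith
    qed
    also have "\<dots> = 1 + (1 + ?c) * ?cV * N + ?c * D" by (simp add: algebra_simps)
    also have "\<dots> \<le> (1 + ?c) * Mx + (1 + ?c) * ?cV * Mx + (1 + ?cV) * (1 + ?c) * D"
    proof -
      have "1 \<le> (1 + ?c) * Mx" using mult_mono[of 1 "1 + ?c" 1 Mx] Mx c0 by simp
      moreover have "(1 + ?c) * ?cV * N \<le> (1 + ?c) * ?cV * Mx"
        using Mx cV0 c0 by (intro mult_left_mono) auto
      moreover have "?c * D \<le> (1 + ?cV) * (1 + ?c) * D"
        using cV0 c0 N0 by (intro mult_right_mono) (auto simp: algebra_simps)
      ultimately show ?thesis by linarith
    qed
    also have "\<dots> = (1 + ?cV) * (1 + ?c) * Mx + (1 + ?cV) * (1 + ?c) * D" by (simp add: algebra_simps)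
    finally show ?thesis .
  qed
  define th1 where "th1 = 3 * eps\<^sup>2 * ?Cw * (1 + ?cV) * (1 + ?c)"
  have th1: "th1 \<le> theta" unfolding theta_def th1_def by simp
  have th10: "th1 \<ge> 0" unfolding th1_def using cV0 c0 by simp
  have "(norm (iW (F v - F w)))\<^sup>2 \<le> ?Cw * (eps\<^sup>2 * (1 + A + B)\<^sup>2 * d\<^sup>2)"
    using hW mult_left_mono[OF hx2 cV0(2)] by linarith
  also have "\<dots> \<le> ?Cw * (eps\<^sup>2 * (3 * (1 + A\<^sup>2 + B\<^sup>2)) * d\<^sup>2)"
    using cV0 by (intro mult_left_mono mult_right_mono sq) auto
  also have "\<dots> = (3 * eps\<^sup>2 * ?Cw * d\<^sup>2) * (1 + A\<^sup>2 + B\<^sup>2)" by (simp add: algebra_simps)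
  also have "\<dots> \<le> (3 * eps\<^sup>2 * ?Cw * d\<^sup>2) * ((1 + ?cV) * (1 + ?c) * Mx + (1 + ?cV) * (1 + ?c) * D)"
    using cV0 by (intro mult_left_mono Q) auto
  also have "\<dots> = th1 * Mx * d\<^sup>2 + th1 * (d\<^sup>2 * D)" unfolding th1_def by (simp add: algebra_simps)
  also have "\<dots> \<le> theta * Mx * d\<^sup>2 + theta * (d\<^sup>2 * D)"
    using th1 Mx N0 by (intro add_mono mult_right_mono) auto
  also have "d\<^sup>2 * D = d powr (2 + vtheta)" unfolding D_def using a0 by (simp add: powr_add)
  finally show "(norm (iW (F v - F w)))\<^sup>2 \<le>
                theta * max 1 (norm v powr vtheta) * (norm (iV (v - w)))\<^sup>2
                + theta * norm (iV (v - w)) powr (2 + vtheta)"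
    by (simp add: Mx_def N_def d_def)
qed

end
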